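(* Let $\varphi\in\Phi_w(\Omega)$ and $f\in L^2(\Omega)$. Let $u\in L^2(\Omega)$, let $(u_i)\subset L^2(\Omega)$ converge to $u$ in $L^2(\Omega)$ and let $p_i\to1^+$. Then $F(u)\le\liminf_{i\to\infty}F_{p_i}(u_i)$.
   Context: $\Omega\subset\mathbb{R}^n$ is a bounded domain. A function $g$ on $(0,\infty)$ is $L$-almost increasing ($L\ge1$) if $g(s)\le Lg(t)$ whenever $0<s\le t$. A weak $\Phi$-function, $\varphi\in\Phi_w(\Omega)$, is $\varphi:\Omega\times[0,\infty)\to[0,\infty]$ such that for a.e. $x\in\Omega$: for every measurable $h:\Omega\to\mathbb{R}$, $y\mapsto\varphi(y,h(y))$ is measurable; $t\mapsto\varphi(x,t)$ is non-decreasing; $\varphi(x,0)=\lim_{t\to0^+}\varphi(x,t)=0$, $\lim_{t\to\infty}\varphi(x,t)=\infty$; $t\mapsto\varphi(x,t)/t$ is $L$-almost increasing on $(0,\infty)$ with $L$ independent of $x$. $\varphi^p(x,t):=\varphi(x,t)^p$. $\varrho_\varphi(u)=\int_\Omega\varphi(x,|u|)\,dx$; $\|u\|_\varphi=\inf\{\lambda>0:\varrho_\varphi(u/\lambda)\le1\}$, $\|v\|_\varphi=\||v|\|_\varphi$ for vector fields. $L^{1,\varphi}(\Omega)=\{u\in W^{1,1}(\Omega):\|u\|_{L^1(\Omega)}+\|\nabla u\|_\varphi<\infty\}$. For $p>1$, $F_p:L^2(\Omega)\to[0,\infty]$, $F_p(u)=\int_\Omega\varphi(x,|\nabla u|)^p+|u-f|^2\,dx$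 if $u\in L^{1,\varphi^p}(\Omega)\cap L^2(\Omega)$ and $+\infty$ otherwise; $F(u)=\inf\{\liminf_{i\to\infty}\int_\Omega\varphi(x,|\nabla v_i|)+|v_i-f|^2\,dx: v_i\in L^{1,\varphi}(\Omega)\cap L^2(\Omega),\ v_i\to u\text{ in }L^2(\Omega)\}$. *)

theory Defs
  imports "HOL-Analysis.Analysis"
begin

definition bounded_domain :: "'a::euclidean_space set \<Rightarrow> bool" where
  "bounded_domain \<Omega> \<longleftrightarrow> open \<Omega> \<and> connected \<Omega> \<and> \<Omega> \<noteq> {} \<and> bounded \<Omega>"

definition in_L2 :: "'a::euclidean_space set \<Rightarrow> ('a \<Rightarrow> real) \<Rightarrow> bool" where
  "in_L2 \<Omega> u \<longleftrightarrow> u \<in> borel_measurable (lebesgue_on \<Omega>) \<and>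
                   integrable (lebesgue_on \<Omega>) (\<lambda>x. (u x)\<^sup>2)"

definition L2_norm :: "'a::euclidean_space set \<Rightarrow> ('a \<Rightarrow> real) \<Rightarrow> real" where
  "L2_norm \<Omega> u = sqrt (\<integral>x. (u x)\<^sup>2 \<partial>(lebesgue_on \<Omega>))"

definition L2_converges :: "'a::euclidean_space set \<Rightarrow> (nat \<Rightarrow> 'a \<Rightarrow> real) \<Rightarrow> ('a \<Rightarrow> real) \<Rightarrow> bool" where
  "L2_converges \<Omega> v u \<longleftrightarrow> (\<lambda>i. L2_norm \<Omega> (\<lambda>x. v i x - u x)) \<longlonglongrightarrow> 0"

coinductive smooth_fun :: "('a::euclidean_space \<Rightarrow> real) \<Rightarrow> bool" where
  "(\<forall>x. \<psi> differentiable (at x)) \<Longrightarrow>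
   (\<forall>b\<in>Basis. smooth_fun (\<lambda>x. frechet_derivative \<psi> (at x) b)) \<Longrightarrow> smooth_fun \<psi>"

definition test_fun :: "'a::euclidean_space set \<Rightarrow> ('a \<Rightarrow> real) \<Rightarrow> bool" where
  "test_fun \<Omega> \<psi> \<longleftrightarrow> smooth_fun \<psi> \<and> compact (closure {x. \<psi> x \<noteq> 0})
                     \<and> closure {x. \<psi> x \<noteq> 0} \<subseteq> \<Omega>"

text \<open>G is a (locally integrable, here integrable) weak gradient of u on Omega.\<close>
definition is_weak_gradient :: "'a::euclidean_space set \<Rightarrow> ('a \<Rightarrow> real) \<Rightarrow> ('a \<Rightarrow> 'a) \<Rightarrow> bool" where
  "is_weak_gradient \<Omega> u G \<longleftrightarrow>
     (\<forall>b\<in>Basis. integrable (lebesgue_on \<Omega>) (\<lambda>x. G x \<bullet> b)) \<and>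
     (\<forall>\<psi>. test_fun \<Omega> \<psi> \<longrightarrow> (\<forall>b\<in>Basis.
        (\<integral>x. u x * frechet_derivative \<psi> (at x) b \<partial>(lebesgue_on \<Omega>))
          = - (\<integral>x. (G x \<bullet> b) * \<psi> x \<partial>(lebesgue_on \<Omega>))))"

definition in_W11 :: "'a::euclidean_space set \<Rightarrow> ('a \<Rightarrow> real) \<Rightarrow> bool" where
  "in_W11 \<Omega> u \<longleftrightarrow> integrable (lebesgue_on \<Omega>) u \<and> (\<exists>G. is_weak_gradient \<Omega> u G)"

definition weak_grad :: "'a::euclidean_space set \<Rightarrow> ('a \<Rightarrow> real) \<Rightarrow> 'a \<Rightarrow> 'a" where
  "weak_grad \<Omega> u = (SOME G. is_weak_gradient \<Omega> u G)"

definition almost_increasing :: "real \<Rightarrow> (real \<Rightarrow> ennreal) \<Rightarrow> bool" where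
  "almost_increasing L g \<longleftrightarrow> L \<ge> 1 \<and> (\<forall>s t. 0 < s \<and> s \<le> t \<longrightarrow> g s \<le> ennreal L * g t)"

definition weak_Phi :: "'a::euclidean_space set \<Rightarrow> ('a \<Rightarrow> real \<Rightarrow> ennreal) \<Rightarrow> bool" where
  "weak_Phi \<Omega> \<phi> \<longleftrightarrow>
     (\<forall>h. h \<in> borel_measurable (lebesgue_on \<Omega>) \<and> (\<forall>y\<in>\<Omega>. h y \<ge> 0) \<longrightarrow>
          (\<lambda>y. \<phi> y (h y)) \<in> borel_measurable (lebesgue_on \<Omega>)) \<and>
     (\<exists>L. L \<ge> 1 \<and>
       (AE x in lebesgue_on \<Omega>.
          mono_on {0..} (\<phi> x) \<and>
          \<phi> x 0 = 0 \<and> ((\<phi> x) \<longlongrightarrow> 0) (at_right 0) \<and>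
          ((\<phi> x) \<longlongrightarrow> \<infinity>) at_top \<and>
          almost_increasing L (\<lambda>t. \<phi> x t / ennreal t)))"

definition phi_pow :: "('a \<Rightarrow> real \<Rightarrow> ennreal) \<Rightarrow> real \<Rightarrow> 'a \<Rightarrow> real \<Rightarrow> ennreal" where
  "phi_pow \<phi> p x t = (if \<phi> x t = \<infinity> then \<infinity> else ennreal (enn2real (\<phi> x t) powr p))"

definition modular :: "'a::euclidean_space set \<Rightarrow> ('a \<Rightarrow> real \<Rightarrow> ennreal) \<Rightarrow> ('a \<Rightarrow> real) \<Rightarrow> ennreal" where
  "modular \<Omega> \<phi> w = (\<integral>\<^sup>+x. \<phi> x \<bar>w x\<bar> \<partial>(lebesgue_on \<Omega>))"

text \<open>Luxemburg norm of a vector field v, i.e. of |v|; infimum over the empty set is infinity.\<close>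
definition lux_norm_vec :: "'a::euclidean_space set \<Rightarrow> ('a \<Rightarrow> real \<Rightarrow> ennreal) \<Rightarrow> ('a \<Rightarrow> 'a) \<Rightarrow> ennreal" where
  "lux_norm_vec \<Omega> \<phi> v = Inf {ennreal c | c. c > 0 \<and> modular \<Omega> \<phi> (\<lambda>x. norm (v x) / c) \<le> 1}"

definition L1phi :: "'a::euclidean_space set \<Rightarrow> ('a \<Rightarrow> real \<Rightarrow> ennreal) \<Rightarrow> ('a \<Rightarrow> real) \<Rightarrow> bool" where
  "L1phi \<Omega> \<phi> u \<longleftrightarrow> in_W11 \<Omega> u \<and> lux_norm_vec \<Omega> \<phi> (weak_grad \<Omega> u) < \<infinity>"

definition energy :: "'a::euclidean_space set \<Rightarrow> ('a \<Rightarrow> real \<Rightarrow> ennreal) \<Rightarrow> ('a \<Rightarrow> real) \<Rightarrow> ('a \<Rightarrow> real) \<Rightarrow> ennreal" where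
  "energy \<Omega> \<phi> f v = (\<integral>\<^sup>+x. \<phi> x (norm (weak_grad \<Omega> v x)) + ennreal ((v x - f x)\<^sup>2) \<partial>(lebesgue_on \<Omega>))"

definition F_p :: "'a::euclidean_space set \<Rightarrow> ('a \<Rightarrow> real \<Rightarrow> ennreal) \<Rightarrow> ('a \<Rightarrow> real) \<Rightarrow> real \<Rightarrow> ('a \<Rightarrow> real) \<Rightarrow> ennreal" where
  "F_p \<Omega> \<phi> f p u = (if L1phi \<Omega> (phi_pow \<phi> p) u \<and> in_L2 \<Omega> u
                       then energy \<Omega> (phi_pow \<phi> p) f u else \<infinity>)"

definition F_relax :: "'a::euclidean_space set \<Rightarrow> ('a \<Rightarrow> real \<Rightarrow> ennreal) \<Rightarrow> ('a \<Rightarrow> real) \<Rightarrow> ('a \<Rightarrow> real) \<Rightarrow> ennreal" where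
  "F_relax \<Omega> \<phi> f u = Inf {liminf (\<lambda>i. energy \<Omega> \<phi> f (v i)) | v.
       (\<forall>i. L1phi \<Omega> \<phi> (v i) \<and> in_L2 \<Omega> (v i)) \<and> L2_converges \<Omega> v u}"

end

theory Submission imports Defs begin

lemma young_pt:
  fixes a p :: real assumes "p > 1" "a \<ge> 0"
  shows "a \<le> a powr p + (1 - 1/p)"
proof -
  define q where "q = p / (p - 1)"
  have q: "q > 1" "1/p + 1/q = 1" using assms by (auto simp: q_def field_simps)
  have "a * 1 \<le> a powr p / p + 1 powr q / q"
    by (rule Youngs_inequality) (use assms q in auto)
  moreover have "a powr p / p \<le> a powr p" using assms
    by (simp add: divide_le_eq mult_le_cancel_left1)
  moreover have "1 / q = 1 - 1/p" using q by linarith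
  ultimately show ?thesis by simp
qed

lemma phi_young:
  assumes "p > 1"
  shows "\<phi> x t \<le> phi_pow \<phi> p x t + ennreal (1 - 1/p)"
proof (cases "\<phi> x t = \<infinity>")
  case True then show ?thesis by (simp add: phi_pow_def)
next
  case False
  define a where "a = enn2real (\<phi> x t)"
  have a: "\<phi> x t = ennreal a" "a \<ge> 0" using False by (auto simp: a_def ennreal_enn2real_if)
  have c: "1 - 1/p \<ge> 0" using assms by (simp add: field_simps)
  have "ennreal a \<le> ennreal (a powr p + (1 - 1/p))"
    using young_pt[OF assms a(2)] by (rule ennreal_leI)
  also have "\<dots> = ennreal (a powr p) + ennreal (1 - 1/p)"
    by (rule ennreal_plus) (use c a in auto)
  finally show ?thesis using a False by (simp add: phi_pow_def)
qed


lemma wg_meas: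
  assumes "in_W11 \<Omega> v"
  shows "weak_grad \<Omega> v \<in> borel_measurable (lebesgue_on \<Omega>)"
proof -
  from assms obtain G where "is_weak_gradient \<Omega> v G" by (auto simp: in_W11_def)
  then have "is_weak_gradient \<Omega> v (weak_grad \<Omega> v)" unfolding weak_grad_def by (rule someI[where P="is_weak_gradient \<Omega> v"])
  then have "\<forall>b\<in>Basis. (\<lambda>x. weak_grad \<Omega> v x \<bullet> b) \<in> borel_measurable (lebesgue_on \<Omega>)"
    by (auto simp: is_weak_gradient_def)
  then show ?thesis by (subst borel_measurable_euclidean_space) auto
qed

lemma phi_comp_meas:
  assumes "weak_Phi \<Omega> \<phi>" "in_W11 \<Omega> v"
  shows "(\<lambda>x. \<phi> x (norm (weak_grad \<Omega> v x))) \<in> borel_measurable (lebesgue_on \<Omega>)"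
proof -
  have "(\<lambda>x. norm (weak_grad \<Omega> v x)) \<in> borel_measurable (lebesgue_on \<Omega>)"
    using wg_meas[OF assms(2)] by measurable
  then show ?thesis using assms(1) unfolding weak_Phi_def by auto
qed

lemma pow_comp_meas:
  assumes "weak_Phi \<Omega> \<phi>" "in_W11 \<Omega> v"
  shows "(\<lambda>x. phi_pow \<phi> p x (norm (weak_grad \<Omega> v x))) \<in> borel_measurable (lebesgue_on \<Omega>)"
proof -
  note m[measurable] = phi_comp_meas[OF assms]
  show ?thesis unfolding phi_pow_def by measurable
qed

lemma energy_bound:
  assumes "weak_Phi \<Omega> \<phi>" "in_W11 \<Omega> v" "in_L2 \<Omega> v" "in_L2 \<Omega> f" "p > 1"
    and fin: "emeasure (lebesgue_on \<Omega>) \<Omega> = ennreal m" and m0: "m \<ge> 0"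
  shows "energy \<Omega> \<phi> f v \<le> energy \<Omega> (phi_pow \<phi> p) f v + ennreal ((1 - 1/p) * m)"
proof -
  note m1[measurable] = pow_comp_meas[OF assms(1,2)]
  have [measurable]: "v \<in> borel_measurable (lebesgue_on \<Omega>)" "f \<in> borel_measurable (lebesgue_on \<Omega>)"
    using assms(3,4) by (auto simp: in_L2_def)
  have c: "1 - 1/p \<ge> 0" using assms by (simp add: field_simps)
  have "energy \<Omega> \<phi> f v \<le> (\<integral>\<^sup>+x. (phi_pow \<phi> p x (norm (weak_grad \<Omega> v x)) + ennreal ((v x - f x)\<^sup>2))
         + ennreal (1 - 1/p) \<partial>(lebesgue_on \<Omega>))"
    unfolding energy_def
  proof (rule nn_integral_mono)
    fix x
    have "\<phi> x (norm (weak_grad \<Omega> v x)) \<le> phi_pow \<phi> p x (norm (weak_grad \<Omega> v x)) + ennreal (1 - 1/p)"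
      by (rule phi_young[OF assms(5)])
    then show "\<phi> x (norm (weak_grad \<Omega> v x)) + ennreal ((v x - f x)\<^sup>2) \<le>
      phi_pow \<phi> p x (norm (weak_grad \<Omega> v x)) + ennreal ((v x - f x)\<^sup>2) + ennreal (1 - 1/p)"
      by (simp add: add_right_mono ac_simps add_mono)
  qed
  also have "\<dots> = energy \<Omega> (phi_pow \<phi> p) f v + (\<integral>\<^sup>+x. ennreal (1 - 1/p) \<partial>(lebesgue_on \<Omega>))"
    unfolding energy_def by (rule nn_integral_add) measurable
  also have "(\<integral>\<^sup>+x. ennreal (1 - 1/p) \<partial>(lebesgue_on \<Omega>)) = ennreal ((1 - 1/p) * m)"
    using fin c m0 by (simp add: nn_integral_const ennreal_mult)
  finally show ?thesis .
qed


lemma phi_scale: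
  fixes L c t :: real
  assumes ai: "almost_increasing L (\<lambda>t. \<phi> x t / ennreal t)" and z: "\<phi> x 0 = 0"
    and c: "c \<ge> 1" and t: "t \<ge> 0"
  shows "\<phi> x (t / c) \<le> ennreal (L / c) * \<phi> x t"
proof (cases "t = 0")
  case True then show ?thesis using z by simp
next
  case False
  have L: "L \<ge> 1" using ai by (simp add: almost_increasing_def)
  define s where "s = t / c"
  have s: "0 < s" "s \<le> t" using False t c by (auto simp: s_def field_simps)
  have ineq: "\<phi> x s / ennreal s \<le> ennreal L * (\<phi> x t / ennreal t)"
    using ai s unfolding almost_increasing_def by blast
  show ?thesis
  proof (cases "\<phi> x t = \<infinity>")
    case True
    have "L / c > 0" using L c by simp
    then show ?thesis using True L c by (simp add: ennreal_mult_top)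
  next
    case False
    then obtain b where b: "\<phi> x t = ennreal b" "b \<ge> 0" by (cases "\<phi> x t") auto
    have tp: "t > 0" using \<open>t \<noteq> 0\<close> t by simp
    have "ennreal L * (\<phi> x t / ennreal t) = ennreal L * ennreal (b / t)"
      using b tp by (simp add: divide_ennreal)
    also have "\<dots> = ennreal (L * (b / t))"
      by (rule ennreal_mult[symmetric]) (use L b tp in auto)
    finally have rhs: "ennreal L * (\<phi> x t / ennreal t) = ennreal (L * (b / t))" .
    have "\<phi> x s \<noteq> \<infinity>"
    proof
      assume "\<phi> x s = \<infinity>"
      then have "\<phi> x s / ennreal s = \<infinity>" using s by (simp add: ennreal_top_divide)
      then show False using ineq rhs by (simp add: top_unique)
    qed
    then obtain a where a: "\<phi> x s = ennreal a" "a \<ge> 0" by (cases "\<phi> x s") auto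
    have "ennreal (a / s) \<le> ennreal (L * (b / t))"
      using ineq rhs a s by (simp add: divide_ennreal)
    then have "a / s \<le> L * (b / t)"
      using L b tp by (subst (asm) ennreal_le_iff) auto
    then have "a \<le> L * (b / t) * s" using s by (simp add: divide_le_eq)
    also have "L * (b / t) * s = L / c * b" using tp c by (simp add: s_def field_simps)
    finally have "a \<le> L / c * b" .
    then have "ennreal a \<le> ennreal (L / c * b)" by (rule ennreal_leI)
    also have "\<dots> = ennreal (L / c) * ennreal b" by (rule ennreal_mult) (use L c b in auto)
    finally show ?thesis using a b by (simp add: s_def)
  qed
qed


lemma L1phi_transfer:
  assumes wp: "weak_Phi \<Omega> \<phi>" and p: "p > 1"
    and fin: "emeasure (lebesgue_on \<Omega>) \<Omega> = ennreal m" and m0: "m \<ge> 0"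
    and L1: "L1phi \<Omega> (phi_pow \<phi> p) v" and v2: "in_L2 \<Omega> v" and f2: "in_L2 \<Omega> f"
    and Efin: "energy \<Omega> (phi_pow \<phi> p) f v < \<infinity>"
  shows "L1phi \<Omega> \<phi> v"
proof -
  have W: "in_W11 \<Omega> v" using L1 by (simp add: L1phi_def)
  define G where "G = weak_grad \<Omega> v"
  have gm: "(\<lambda>x. \<phi> x (norm (G x))) \<in> borel_measurable (lebesgue_on \<Omega>)"
    unfolding G_def by (rule phi_comp_meas[OF wp W])
  have "energy \<Omega> \<phi> f v \<le> energy \<Omega> (phi_pow \<phi> p) f v + ennreal ((1 - 1/p) * m)"
    by (rule energy_bound[OF wp W v2 f2 p fin m0])
  also have "\<dots> < \<infinity>" using Efin by (simp add: ennreal_add_less_top)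
  finally have E: "energy \<Omega> \<phi> f v < \<infinity>" .
  have I: "(\<integral>\<^sup>+x. \<phi> x (norm (G x)) \<partial>(lebesgue_on \<Omega>)) \<le> energy \<Omega> \<phi> f v"
    unfolding energy_def G_def by (rule nn_integral_mono) (auto intro: add_increasing2)
  define M where "M = enn2real (energy \<Omega> \<phi> f v)"
  have M: "energy \<Omega> \<phi> f v = ennreal M" "M \<ge> 0" using E by (auto simp: M_def ennreal_enn2real_if)
  from wp obtain L where L: "L \<ge> 1" and AE: "AE x in lebesgue_on \<Omega>.
          mono_on {0..} (\<phi> x) \<and>
          \<phi> x 0 = 0 \<and> ((\<phi> x) \<longlongrightarrow> 0) (at_right 0) \<and>
          ((\<phi> x) \<longlongrightarrow> \<infinity>) at_top \<and>
          almost_increasing L (\<lambda>t. \<phi> x t / ennreal t)"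
    unfolding weak_Phi_def by blast
  define c where "c = max 1 (L * M)"
  have c: "c \<ge> 1" "c \<ge> L * M" by (auto simp: c_def)
  have AEpt: "AE x in lebesgue_on \<Omega>. \<phi> x \<bar>norm (G x) / c\<bar> \<le> ennreal (L / c) * \<phi> x (norm (G x))"
  proof (rule eventually_mono[OF AE])
    fix x assume h: "mono_on {0..} (\<phi> x) \<and>
          \<phi> x 0 = 0 \<and> ((\<phi> x) \<longlongrightarrow> 0) (at_right 0) \<and>
          ((\<phi> x) \<longlongrightarrow> \<infinity>) at_top \<and>
          almost_increasing L (\<lambda>t. \<phi> x t / ennreal t)"
    have "\<bar>norm (G x) / c\<bar> = norm (G x) / c" using c by simp
    then show "\<phi> x \<bar>norm (G x) / c\<bar> \<le> ennreal (L / c) * \<phi> x (norm (G x))"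
      using phi_scale[of L \<phi> x c "norm (G x)"] h c by simp
  qed
  have "modular \<Omega> \<phi> (\<lambda>x. norm (G x) / c) \<le> (\<integral>\<^sup>+x. ennreal (L / c) * \<phi> x (norm (G x)) \<partial>(lebesgue_on \<Omega>))"
    unfolding modular_def by (rule nn_integral_mono_AE[OF AEpt])
  also have "\<dots> = ennreal (L / c) * (\<integral>\<^sup>+x. \<phi> x (norm (G x)) \<partial>(lebesgue_on \<Omega>))"
    by (rule nn_integral_cmult[OF gm])
  also have "\<dots> \<le> ennreal (L / c) * ennreal M"
    using I M by (intro mult_left_mono) auto
  also have "\<dots> = ennreal (L / c * M)"
    by (rule ennreal_mult[symmetric]) (use L c M in auto)
  also have "\<dots> \<le> 1"
  proof -
    have "L / c * M \<le> 1" using c L M by (simp add: field_simps)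
    then show ?thesis by (simp add: ennreal_le_1)
  qed
  finally have mod1: "modular \<Omega> \<phi> (\<lambda>x. norm (G x) / c) \<le> 1" .
  have "lux_norm_vec \<Omega> \<phi> G \<le> ennreal c"
    unfolding lux_norm_vec_def using mod1 c by (intro Inf_lower) auto
  then have "lux_norm_vec \<Omega> \<phi> G < \<infinity>" using le_less_trans by fastforce
  then show ?thesis using W by (simp add: L1phi_def G_def)
qed


lemma fin_meas:
  assumes "bounded_domain \<Omega>"
  shows "emeasure (lebesgue_on \<Omega>) \<Omega> = ennreal (measure lebesgue \<Omega>)"
proof -
  have l: "\<Omega> \<in> lmeasurable" using assms by (intro lmeasurable_open) (auto simp: bounded_domain_def)
  then have "\<Omega> \<in> sets lebesgue" by (simp add: fmeasurable_def)
  then have "emeasure (lebesgue_on \<Omega>) \<Omega> = emeasure lebesgue \<Omega>"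
    by (simp add: emeasure_restrict_space)
  also have "\<dots> = ennreal (measure lebesgue \<Omega>)"
    using l by (intro emeasure_eq_ennreal_measure) (auto simp: fmeasurable_def)
  finally show ?thesis .
qed

theorem mainTheorem12:
  fixes \<Omega> :: "'a::euclidean_space set"
    and \<phi> :: "'a \<Rightarrow> real \<Rightarrow> ennreal"
    and f u :: "'a \<Rightarrow> real"
    and us :: "nat \<Rightarrow> 'a \<Rightarrow> real"
    and p :: "nat \<Rightarrow> real"
  assumes "bounded_domain \<Omega>"
    and "weak_Phi \<Omega> \<phi>"
    and "in_L2 \<Omega> f"
    and "in_L2 \<Omega> u"
    and "\<forall>i. in_L2 \<Omega> (us i)"
    and "L2_converges \<Omega> us u"
    and "\<forall>i. p i > 1"
    and "p \<longlonglongrightarrow> 1"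
  shows "F_relax \<Omega> \<phi> f u \<le> liminf (\<lambda>i. F_p \<Omega> \<phi> f (p i) (us i))"
proof -
  define Fs where "Fs = (\<lambda>i. F_p \<Omega> \<phi> f (p i) (us i))"
  define l where "l = liminf Fs"
  define m where "m = measure lebesgue \<Omega>"
  have fin: "emeasure (lebesgue_on \<Omega>) \<Omega> = ennreal m" unfolding m_def by (rule fin_meas[OF assms(1)])
  have m0: "m \<ge> 0" by (simp add: m_def)
  show ?thesis
  proof (cases "l = \<infinity>")
    case True then show ?thesis by (simp add: l_def Fs_def)
  next
    case False
    then have lt: "l < \<infinity>" by (simp add: less_top)
    obtain r where r: "strict_mono r" "(Fs \<circ> r) \<longlonglongrightarrow> l"
      using liminf_subseq_lim[of Fs] unfolding l_def by blast
    have "eventually (\<lambda>i. (Fs \<circ> r) i < \<infinity>) sequentially"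
      using order_tendstoD(2)[OF r(2) lt] .
    then obtain N where N: "\<And>i. i \<ge> N \<Longrightarrow> (Fs \<circ> r) i < \<infinity>"
      by (auto simp: eventually_sequentially)
    define s where "s = (\<lambda>i. r (i + N))"
    have s: "strict_mono s" using r(1) by (simp add: strict_mono_def s_def)
    have Fsl: "(\<lambda>i. Fs (s i)) \<longlonglongrightarrow> l"
      using LIMSEQ_ignore_initial_segment[OF r(2), of N] by (simp add: s_def o_def)
    have Ffin: "Fs (s i) < \<infinity>" for i using N[of "i + N"] by (simp add: s_def)
    define v where "v = (\<lambda>i. us (s i))"
    have props: "L1phi \<Omega> (phi_pow \<phi> (p (s i))) (v i) \<and> in_L2 \<Omega> (v i) \<and>
        Fs (s i) = energy \<Omega> (phi_pow \<phi> (p (s i))) f (v i)" for i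
      using Ffin[of i] by (auto simp: Fs_def F_p_def v_def split: if_splits)
    have vL1: "L1phi \<Omega> \<phi> (v i)" for i
      using L1phi_transfer[OF assms(2) _ fin m0, of "p (s i)" "v i" f] props[of i] Ffin[of i] assms(3,7)
      by auto
    have conv: "L2_converges \<Omega> v u"
      using LIMSEQ_subseq_LIMSEQ[OF assms(6)[unfolded L2_converges_def] s]
      by (simp add: L2_converges_def v_def o_def)
    have "F_relax \<Omega> \<phi> f u \<le> liminf (\<lambda>i. energy \<Omega> \<phi> f (v i))"
      unfolding F_relax_def using vL1 props conv by (intro Inf_lower) blast
    also have "\<dots> \<le> liminf (\<lambda>i. Fs (s i) + ennreal ((1 - 1 / p (s i)) * m))"
    proof (intro Liminf_mono always_eventually allI)
      fix i
      have W: "in_W11 \<Omega> (v i)" using props[of i] by (simp add: L1phi_def)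
      show "energy \<Omega> \<phi> f (v i) \<le> Fs (s i) + ennreal ((1 - 1 / p (s i)) * m)"
        using energy_bound[OF assms(2) W _ assms(3) _ fin m0, of "p (s i)"] props[of i] assms(7)
        by auto
    qed
    also have "\<dots> = l"
    proof (rule lim_imp_Liminf)
      have ps: "(\<lambda>i. p (s i)) \<longlonglongrightarrow> 1"
        using LIMSEQ_subseq_LIMSEQ[OF assms(8) s] by (simp add: o_def)
      have "(\<lambda>i. (1 - 1 / p (s i)) * m) \<longlonglongrightarrow> (1 - 1 / 1) * m"
        by (intro tendsto_intros ps) simp
      then have "(\<lambda>i. ennreal ((1 - 1 / p (s i)) * m)) \<longlonglongrightarrow> ennreal 0"
        by (intro tendsto_ennrealI) simp
      from tendsto_add[OF Fsl this]
      show "(\<lambda>i. Fs (s i) + ennreal ((1 - 1 / p (s i)) * m)) \<longlonglongrightarrow> l" by simp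
    qed simp
    finally show ?thesis by (simp add: l_def Fs_def)
  qed
qed

end
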